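(* Let $(\mathfrak g,r)$ be a triangular Lie bialgebra. For $\mu\in\mathbb R$ define $R_\mu:\mathcal D(\mathfrak g)\to\mathcal D(\mathfrak g)$ by $R_\mu(x,a^* )=(\mu r(a^* )+x,-a^* )$, and let $\tilde r_{\pm,\mu}=R_\mu\varphi^{-1}\pm\varphi^{-1}:\mathcal D(\mathfrak g)^*\to\mathcal D(\mathfrak g)$, regarded as elements of $\mathcal D(\mathfrak g)\otimes\mathcal D(\mathfrak g)$. Then for each sign, $\tilde r_{\pm,\mu}$ is a solution of the CYBE in $\mathcal D(\mathfrak g)$ whose symmetric part is invariant and invertible (as a map $\mathcal D(\mathfrak g)^*\to\mathcal D(\mathfrak g)$); thus $(\mathcal D(\mathfrak g),\tilde r_{\pm,\mu})$, with cocommutator $\delta(X)=(\mathrm{ad}(X)\otimes\mathrm{id}+\mathrm{id}\otimes\mathrm{ad}(X))\tilde r_{\pm,\mu}$, is a factorizable quasitriangular Lie bialgebra.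
   Context: $\mathfrak g$ a finite-dimensional real Lie algebra; an element $t\in V\otimes V$ is identified with $t:V^*\to V$ via $\langle t(a),b\rangle=\langle a\otimes b,t\rangle$. $(\mathfrak g,r)$ triangular: $r\in\mathfrak g\otimes\mathfrak g$ is skew-symmetric and satisfies the CYBE $[r_{12},r_{13}]+[r_{12},r_{23}]+[r_{13},r_{23}]=0$ (for $r=\sum a_i\otimes b_i$: $[r_{12},r_{13}]=\sum[a_i,a_j]\otimes b_i\otimes b_j$, $[r_{12},r_{23}]=\sum a_i\otimes[b_i,a_j]\otimes b_j$, $[r_{13},r_{23}]=\sum a_i\otimes a_j\otimes[b_i,b_j]$). Coadjoint action $\langle\mathrm{ad}^*(x)a^*,y\rangle=-\langle a^*,[x,y]\rangle$; $[a^*,b^*]_\delta=\mathrm{ad}^*(r(a^* ))b^*-\mathrm{ad}^*(r(b^* ))a^*$; $\langle\mathrm{ad}^*(a^* )x,b^*\rangle=-\langle x,[a^*,b^*]_\delta\rangle$. The Drinfeld double $\mathcal D(\mathfrak g)=\mathfrak g\oplus\mathfrak g^*$ has bracket $[(x,a^* ),(y,b^* )]=([x,y]+\mathrm{ad}^*(a^* )y-\mathrm{ad}^*(b^* )x,[a^*,b^*]_\delta+\mathrm{ad}^*(x)b^*-\mathrm{ad}^*(y)a^* )$ and the nondegenerate symmetric invariant form $\mathfrak B_p((x,a^* ),(y,b^* ))=\langle a^*,y\rangle+\langle x,b^*\rangle$; $\varphi:\mathcal D(\mathfrak g)\to\mathcal D(\mathfrak g)^*$ is defined by $\mathfrak B_p(X,Y)=\langle\varphi(X),Y\rangle$.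 Symmetric part of $t$: $(t+\sigma(t))/2$; invariant means annihilated by $\mathrm{ad}(X)\otimes\mathrm{id}+\mathrm{id}\otimes\mathrm{ad}(X)$ for all $X$. *)

theory Defs
  imports "HOL-Analysis.Analysis"
begin

text \<open>Coordinates: a finite-dimensional real vector space V is real^'i for a finite
index type 'i::finite with standard basis axis i 1; its dual V^* is identified with real^'i::finite
via the dual basis, the pairing being the dot product.  A tensor
t = sum t$i$j e_i (x) e_j in V (x) V is the matrix t :: real^'i::finite^'i::finite.\<close>

definition lie_algebra :: "(real^'i::finite \<Rightarrow> real^'i::finite \<Rightarrow> real^'i::finite) \<Rightarrow> bool" where
  "lie_algebra br \<longleftrightarrow> bilinear br \<and> (\<forall>x y. br x y = - br y x) \<and>
     (\<forall>x y z. br x (br y z) + br y (br z x) + br z (br x y) = 0)"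

text \<open>t : V^* -> V with <t(a),b> = <a (x) b, t>.\<close>
definition tmap :: "real^'i::finite^'i::finite \<Rightarrow> real^'i::finite \<Rightarrow> real^'i::finite" where
  "tmap t a = (\<chi> j. \<Sum>i\<in>UNIV. a$i * t$i$j)"

definition tensor_of :: "(real^'i::finite \<Rightarrow> real^'i::finite) \<Rightarrow> real^'i::finite^'i::finite" where
  "tensor_of f = (\<chi> i j. (f (axis i 1))$j)"

definition cybe :: "(real^'i::finite \<Rightarrow> real^'i::finite \<Rightarrow> real^'i::finite) \<Rightarrow> real^'i::finite^'i::finite \<Rightarrow> bool" where
  "cybe br t \<longleftrightarrow> (\<forall>p q s.
     (\<Sum>i\<in>UNIV. \<Sum>k\<in>UNIV. t$i$q * t$k$s * (br (axis i 1) (axis k 1))$p)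
   + (\<Sum>j\<in>UNIV. \<Sum>k\<in>UNIV. t$p$j * t$k$s * (br (axis j 1) (axis k 1))$q)
   + (\<Sum>j\<in>UNIV. \<Sum>l\<in>UNIV. t$p$j * t$q$l * (br (axis j 1) (axis l 1))$s) = 0)"

definition skew_tensor :: "real^'i::finite^'i::finite \<Rightarrow> bool" where
  "skew_tensor t \<longleftrightarrow> transpose t = - t"

definition sym_part :: "real^'i::finite^'i::finite \<Rightarrow> real^'i::finite^'i::finite" where
  "sym_part t = (1/2) *\<^sub>R (t + transpose t)"

definition ad_mat :: "(real^'i::finite \<Rightarrow> real^'i::finite \<Rightarrow> real^'i::finite) \<Rightarrow> real^'i::finite \<Rightarrow> real^'i::finite^'i::finite" where
  "ad_mat br X = (\<chi> p i. (br X (axis i 1))$p)"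

text \<open>(ad(X) (x) id + id (x) ad(X)) t = 0 for all X.\<close>
definition invariant_tensor :: "(real^'i::finite \<Rightarrow> real^'i::finite \<Rightarrow> real^'i::finite) \<Rightarrow> real^'i::finite^'i::finite \<Rightarrow> bool" where
  "invariant_tensor br t \<longleftrightarrow>
     (\<forall>X. ad_mat br X ** t + t ** transpose (ad_mat br X) = 0)"

definition coad :: "(real^'n::finite \<Rightarrow> real^'n::finite \<Rightarrow> real^'n::finite) \<Rightarrow> real^'n::finite \<Rightarrow> real^'n::finite \<Rightarrow> real^'n::finite" where
  "coad br x a = (\<chi> j. - (a \<bullet> br x (axis j 1)))"

definition dual_br :: "(real^'n::finite \<Rightarrow> real^'n::finite \<Rightarrow> real^'n::finite) \<Rightarrow> real^'n::finite^'n::finite \<Rightarrow> real^'n::finite \<Rightarrow> real^'n::finite \<Rightarrow> real^'n::finite" where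
  "dual_br br r a b = coad br (tmap r a) b - coad br (tmap r b) a"

definition coad_dual :: "(real^'n::finite \<Rightarrow> real^'n::finite \<Rightarrow> real^'n::finite) \<Rightarrow> real^'n::finite^'n::finite \<Rightarrow> real^'n::finite \<Rightarrow> real^'n::finite \<Rightarrow> real^'n::finite" where
  "coad_dual br r a x = (\<chi> j. - (x \<bullet> dual_br br r a (axis j 1)))"

text \<open>The double D(g) = g (+) g^* is realised as real^('n::finite + 'n::finite): Inl-coordinates
are the g-component, Inr-coordinates the g^*-component.\<close>
definition dpair :: "real^'n::finite \<Rightarrow> real^'n::finite \<Rightarrow> real^('n::finite + 'n::finite)" where
  "dpair x a = (\<chi> i. case i of Inl j \<Rightarrow> x$j | Inr j \<Rightarrow> a$j)"

definition dfst :: "real^('n::finite + 'n::finite) \<Rightarrow> real^'n::finite" where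
  "dfst X = (\<chi> j. X$(Inl j))"

definition dsnd :: "real^('n::finite + 'n::finite) \<Rightarrow> real^'n::finite" where
  "dsnd X = (\<chi> j. X$(Inr j))"

definition double_br :: "(real^'n::finite \<Rightarrow> real^'n::finite \<Rightarrow> real^'n::finite) \<Rightarrow> real^'n::finite^'n::finite
    \<Rightarrow> real^('n::finite + 'n::finite) \<Rightarrow> real^('n::finite + 'n::finite) \<Rightarrow> real^('n::finite + 'n::finite)" where
  "double_br br r X Y =
     (let x = dfst X; a = dsnd X; y = dfst Y; b = dsnd Y in
      dpair (br x y + coad_dual br r a y - coad_dual br r b x)
            (dual_br br r a b + coad br x b - coad br y a))"

definition Bp :: "real^('n::finite + 'n::finite) \<Rightarrow> real^('n::finite + 'n::finite) \<Rightarrow> real" where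
  "Bp X Y = dsnd X \<bullet> dfst Y + dfst X \<bullet> dsnd Y"

definition phi :: "real^('n::finite + 'n::finite) \<Rightarrow> real^('n::finite + 'n::finite)" where
  "phi X = (\<chi> k. Bp X (axis k 1))"

definition R_mu :: "real^'n::finite^'n::finite \<Rightarrow> real \<Rightarrow> real^('n::finite + 'n::finite) \<Rightarrow> real^('n::finite + 'n::finite)" where
  "R_mu r \<mu> X = dpair (\<mu> *\<^sub>R tmap r (dsnd X) + dfst X) (- dsnd X)"

definition r_tilde :: "real^'n::finite^'n::finite \<Rightarrow> real \<Rightarrow> real \<Rightarrow> real^('n::finite + 'n::finite)^('n::finite + 'n::finite)" where
  "r_tilde r s \<mu> =
     tensor_of (\<lambda>\<xi>. R_mu r \<mu> (inv phi \<xi>) + s *\<^sub>R inv phi \<xi>)"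

end

theory Submission
  imports Defs
begin

lemma inner_D: "(X::real^('n::finite+'n)) \<bullet> Y = dfst X \<bullet> dfst Y + dsnd X \<bullet> dsnd Y"
proof -
  have "X \<bullet> Y = (\<Sum>i\<in>(UNIV::'n set) <+> (UNIV::'n set). X$i * Y$i)"
    by (simp add: inner_vec_def)
  also have "\<dots> = dfst X \<bullet> dfst Y + dsnd X \<bullet> dsnd Y"
    by (subst sum.Plus) (auto simp: inner_vec_def dfst_def dsnd_def o_def)
  finally show ?thesis .
qed

lemma dfst_dpair[simp]: "dfst (dpair x a) = x" and dsnd_dpair[simp]: "dsnd (dpair x a) = a"
  by (auto simp: dfst_def dsnd_def dpair_def vec_eq_iff)

lemma D_eq_iff: "(X::real^('n::finite+'n)) = Y \<longleftrightarrow> dfst X = dfst Y \<and> dsnd X = dsnd Y"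
  apply (auto simp: dfst_def dsnd_def vec_eq_iff)
  by (metis sum.exhaust)

lemma dfst_simps[simp]: "dfst (X + Y) = dfst X + dfst Y" "dfst (X - Y) = dfst X - dfst Y"
  "dfst (- X) = - dfst X" "dfst (c *\<^sub>R X) = c *\<^sub>R dfst X" "dfst 0 = 0"
  by (auto simp: dfst_def vec_eq_iff)
lemma dsnd_simps[simp]: "dsnd (X + Y) = dsnd X + dsnd Y" "dsnd (X - Y) = dsnd X - dsnd Y"
  "dsnd (- X) = - dsnd X" "dsnd (c *\<^sub>R X) = c *\<^sub>R dsnd X" "dsnd 0 = 0"
  by (auto simp: dsnd_def vec_eq_iff)

lemma dfst_axis: "dfst (axis (Inl j) 1 :: real^('n::finite+'n)) = axis j 1"
  "dfst (axis (Inr j) 1 :: real^('n::finite+'n)) = 0"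
  "dsnd (axis (Inl j) 1 :: real^('n::finite+'n)) = 0"
  "dsnd (axis (Inr j) 1 :: real^('n::finite+'n)) = axis j 1"
  by (auto simp: dfst_def dsnd_def vec_eq_iff axis_def)

lemma tmap_mv: "tmap t a = transpose t *v a"
  by (simp add: tmap_def matrix_vector_mult_def transpose_def mult.commute)

lemma linear_tmap: "linear (tmap t)"
  unfolding tmap_mv[abs_def] by (rule matrix_vector_mul_linear)

lemma tmap_simps[simp]: "tmap t (a + b) = tmap t a + tmap t b" "tmap t (a - b) = tmap t a - tmap t b"
  "tmap t (- a) = - tmap t a" "tmap t (c *\<^sub>R a) = c *\<^sub>R tmap t a" "tmap t 0 = 0"
  using linear_tmap[of t] by (auto simp: linear_add linear_diff linear_neg linear_scale linear_0)

lemma lin_exp: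
  fixes c :: "real^'n::finite"
  assumes "linear h" shows "h c = (\<Sum>j\<in>UNIV. c$j *\<^sub>R h (axis j 1))"
proof -
  have "h c = h (\<Sum>j\<in>UNIV. c$j *\<^sub>R axis j 1)"
    using basis_expansion[of c] by (simp add: scalar_mult_eq_scaleR)
  also have "\<dots> = (\<Sum>j\<in>UNIV. c$j *\<^sub>R h (axis j 1))"
    using assms by (simp add: linear_sum linear_scale)
  finally show ?thesis .
qed

lemma coad_dot:
  assumes "bilinear br"
  shows "c \<bullet> coad br x b = - (b \<bullet> br x c)"
proof -
  have lin: "linear (br x)" using assms by (simp add: bilinear_def)
  have "c \<bullet> coad br x b = (\<Sum>j\<in>UNIV. c$j * (- (b \<bullet> br x (axis j 1))))"
    by (simp add: coad_def inner_vec_def)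
  also have "\<dots> = - (b \<bullet> (\<Sum>j\<in>UNIV. c$j *\<^sub>R br x (axis j 1)))"
    by (simp add: inner_sum_right sum_negf)
  also have "\<dots> = - (b \<bullet> br x c)" using lin_exp[OF lin, of c] by simp
  finally show ?thesis .
qed

lemma dual_dot:
  assumes "bilinear br"
  shows "c \<bullet> dual_br br r a b = - (b \<bullet> br (tmap r a) c) + a \<bullet> br (tmap r b) c"
  by (simp add: dual_br_def inner_diff_right coad_dot[OF assms])

lemma coad_dual_dot:
  assumes "bilinear br"
  shows "c \<bullet> coad_dual br r a y = c \<bullet> br (tmap r a) y - a \<bullet> br (tmap r c) y"
proof -
  have lin1: "linear (\<lambda>z. br z y)" for y using assms by (simp add: bilinear_def)
  have lin2: "linear (\<lambda>z. br (tmap r z) y)"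
    using linear_compose[OF linear_tmap lin1] by (simp add: o_def)
  have lin3: "linear (br (tmap r a))" using assms by (simp add: bilinear_def)
  have "c \<bullet> coad_dual br r a y = (\<Sum>j\<in>UNIV. c$j * (- (y \<bullet> dual_br br r a (axis j 1))))"
    by (simp add: coad_dual_def inner_vec_def)
  also have "\<dots> = (\<Sum>j\<in>UNIV. c$j * ((axis j 1) \<bullet> br (tmap r a) y - a \<bullet> br (tmap r (axis j 1)) y))"
    by (simp add: dual_dot[OF assms])
  also have "\<dots> = (\<Sum>j\<in>UNIV. c$j * ((axis j 1) \<bullet> br (tmap r a) y)) - a \<bullet> (\<Sum>j\<in>UNIV. c$j *\<^sub>R br (tmap r (axis j 1)) y)"
    by (simp add: inner_sum_right sum_subtractf algebra_simps)
  also have "\<dots> = c \<bullet> br (tmap r a) y - a \<bullet> br (tmap r c) y"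
    using lin_exp[OF lin2, of c] by (simp add: inner_axis') (simp add: inner_vec_def)
  finally show ?thesis .
qed

definition pairf :: "(real^'n::finite \<Rightarrow> real^'n \<Rightarrow> real^'n) \<Rightarrow> (real^'n \<Rightarrow> real^'n) \<Rightarrow>
   real^'n \<Rightarrow> real^'n \<Rightarrow> real^'n \<Rightarrow> real^'n \<Rightarrow> real^'n \<Rightarrow> real^'n \<Rightarrow> real" where
  "pairf br R z1 z2 x a y b =
     z1 \<bullet> br x y + z1 \<bullet> br (R a) y - a \<bullet> br (R z1) y - z1 \<bullet> br (R b) x + b \<bullet> br (R z1) x
   - b \<bullet> br (R a) z2 + a \<bullet> br (R b) z2 - b \<bullet> br x z2 + a \<bullet> br y z2"

lemma pair_formula:
  assumes "bilinear br"
  shows "Z \<bullet> double_br br r X Y = pairf br (tmap r) (dfst Z) (dsnd Z) (dfst X) (dsnd X) (dfst Y) (dsnd Y)"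
  unfolding double_br_def Let_def pairf_def
  by (simp add: inner_D inner_add_right inner_diff_right coad_dot[OF assms] dual_dot[OF assms]
      coad_dual_dot[OF assms] algebra_simps)

lemma axis_dot[simp]: "axis j 1 \<bullet> (v::real^'n::finite) = v$j"
  by (simp add: inner_axis')

lemma bil_sum:
  fixes h :: "real^'m::finite \<Rightarrow> real^'m \<Rightarrow> real^'m"
  assumes "bilinear h"
  shows "h (\<Sum>i\<in>UNIV. a i *\<^sub>R u i) (\<Sum>k\<in>UNIV. b k *\<^sub>R v k) = (\<Sum>i\<in>UNIV. \<Sum>k\<in>UNIV. (a i * b k) *\<^sub>R h (u i) (v k))"
proof -
  interpret l: linear "\<lambda>x. h x y" for y using assms by (simp add: bilinear_def)
  interpret r: linear "\<lambda>y. h x y" for x using assms by (simp add: bilinear_def)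
  show ?thesis by (simp add: l.sum r.sum l.scale r.scale scaleR_right.sum) (subst sum.swap; simp add: mult.commute)
qed

definition Ecy where
  "Ecy br' F G \<alpha> \<beta> \<gamma> = \<alpha> \<bullet> br' (G \<beta>) (G \<gamma>) + \<beta> \<bullet> br' (F \<alpha>) (G \<gamma>) + \<gamma> \<bullet> br' (F \<alpha>) (F \<beta>)"

lemma cybe_basis:
  fixes br' :: "real^'m::finite \<Rightarrow> real^'m \<Rightarrow> real^'m"
  assumes bl: "bilinear br'" and tt: "\<And>i j. t$i$j = F (axis i 1) $ j"
    and FG: "\<And>\<alpha> \<beta>. \<beta> \<bullet> F \<alpha> = \<alpha> \<bullet> G \<beta>"
  shows "cybe br' t \<longleftrightarrow> (\<forall>p q s. Ecy br' F G (axis p 1) (axis q 1) (axis s 1) = 0)"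
proof -
  have Fe: "F (axis p 1) = (\<Sum>j\<in>UNIV. t$p$j *\<^sub>R axis j 1)" for p
    using basis_expansion[of "F (axis p 1)"] by (simp add: tt scalar_mult_eq_scaleR)
  have Ge: "G (axis q 1) = (\<Sum>i\<in>UNIV. t$i$q *\<^sub>R axis i 1)" for q
  proof -
    have "G (axis q 1) $ j = t$j$q" for j
      using FG[of "axis q 1" "axis j 1"] by (simp add: tt)
    then show ?thesis using basis_expansion[of "G (axis q 1)"] by (simp add: scalar_mult_eq_scaleR)
  qed
  have e: "Ecy br' F G (axis p 1) (axis q 1) (axis s 1) =
     (\<Sum>i\<in>UNIV. \<Sum>k\<in>UNIV. t$i$q * t$k$s * (br' (axis i 1) (axis k 1))$p)
   + (\<Sum>j\<in>UNIV. \<Sum>k\<in>UNIV. t$p$j * t$k$s * (br' (axis j 1) (axis k 1))$q)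
   + (\<Sum>j\<in>UNIV. \<Sum>l\<in>UNIV. t$p$j * t$q$l * (br' (axis j 1) (axis l 1))$s)" for p q s
    unfolding Ecy_def Fe Ge bil_sum[OF bl] by simp
  show ?thesis unfolding cybe_def e ..
qed

lemma phi_eq: "phi X = dpair (dsnd X) (dfst (X::real^('n::finite+'n)))"
  unfolding D_eq_iff
  by (auto simp: phi_def Bp_def dfst_def dsnd_def vec_eq_iff axis_def inner_vec_def dpair_def
      if_distrib cong: if_cong)

lemma phi_phi: "phi (phi X) = X"
  by (simp add: phi_eq D_eq_iff)

lemma inv_phi: "inv phi = phi"
  by (rule inv_equality) (simp_all add: phi_phi)

lemma tmap_axis: "tmap r (axis i 1) $ j = r$i$j"
proof -
  have "(\<Sum>ia\<in>UNIV. (if ia = i then 1 else 0) * r$ia$j) = (\<Sum>ia\<in>UNIV. if ia = i then r$ia$j else 0)"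
    by (rule sum.cong) auto
  then show ?thesis by (simp add: tmap_def axis_def)
qed

lemma skew_entry: "skew_tensor r \<Longrightarrow> r$i$j = - r$j$i"
proof -
  assume "skew_tensor r"
  then have "transpose r $ j $ i = (- r) $ j $ i" by (simp add: skew_tensor_def)
  then show ?thesis by (simp add: transpose_def)
qed

lemma skew_dot:
  assumes "skew_tensor r" shows "c \<bullet> tmap r d = - (d \<bullet> tmap r c)"
proof -
  have "c \<bullet> tmap r d = (\<Sum>j\<in>UNIV. \<Sum>i\<in>UNIV. c$j * (d$i * r$i$j))"
    unfolding tmap_def inner_vec_def by (simp add: sum_distrib_left)
  also have "\<dots> = (\<Sum>i\<in>UNIV. \<Sum>j\<in>UNIV. c$j * (d$i * r$i$j))" by (rule sum.swap)
  also have "\<dots> = - (\<Sum>i\<in>UNIV. \<Sum>j\<in>UNIV. d$i * (c$j * r$j$i))"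
    unfolding sum_negf[symmetric]
    apply (intro sum.cong refl)
    subgoal for i j using skew_entry[OF assms, of j i] by simp
    done
  also have "\<dots> = - (d \<bullet> tmap r c)"
    unfolding tmap_def inner_vec_def by (simp add: sum_distrib_left)
  finally show ?thesis .
qed

definition Fr :: "real^'n::finite^'n \<Rightarrow> real \<Rightarrow> real \<Rightarrow> real^('n+'n) \<Rightarrow> real^('n+'n)" where
  "Fr r s \<mu> \<xi> = dpair (\<mu> *\<^sub>R tmap r (dfst \<xi>) + (1+s) *\<^sub>R dsnd \<xi>) ((s-1) *\<^sub>R dfst \<xi>)"
definition Gr :: "real^'n::finite^'n \<Rightarrow> real \<Rightarrow> real \<Rightarrow> real^('n+'n) \<Rightarrow> real^('n+'n)" where
  "Gr r s \<mu> \<xi> = dpair (- (\<mu> *\<^sub>R tmap r (dfst \<xi>)) + (s-1) *\<^sub>R dsnd \<xi>) ((1+s) *\<^sub>R dfst \<xi>)"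

lemma rt_entry: "r_tilde r s \<mu> $ I $ J = Fr r s \<mu> (axis I 1) $ J"
proof -
  have "R_mu r \<mu> (phi \<xi>) + s *\<^sub>R phi \<xi> = Fr r s \<mu> \<xi>" for \<xi>
    by (simp add: R_mu_def phi_eq Fr_def D_eq_iff algebra_simps)
  then show ?thesis by (simp add: r_tilde_def tensor_of_def inv_phi)
qed

lemma FG_rt:
  assumes "skew_tensor r" shows "\<beta> \<bullet> Fr r s \<mu> \<alpha> = \<alpha> \<bullet> Gr r s \<mu> \<beta>"
  using skew_dot[OF assms, of "dfst \<beta>" "dfst \<alpha>"]
    inner_commute[of "dfst \<beta>" "dsnd \<alpha>"] inner_commute[of "dsnd \<beta>" "dfst \<alpha>"]
  by (simp add: Fr_def Gr_def inner_D inner_add_right algebra_simps)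

lemma core:
  fixes br :: "real^'n::finite \<Rightarrow> real^'n \<Rightarrow> real^'n"
  assumes bl: "bilinear br" and as: "\<And>x y. br x y = - br y x" and s: "s = 1 \<or> s = -1"
  shows "pairf br (tmap r) a1 a2 (- (\<mu> *\<^sub>R tmap r b1) + (s-1) *\<^sub>R b2) ((1+s) *\<^sub>R b1)
                                 (- (\<mu> *\<^sub>R tmap r c1) + (s-1) *\<^sub>R c2) ((1+s) *\<^sub>R c1)
       + pairf br (tmap r) b1 b2 (\<mu> *\<^sub>R tmap r a1 + (1+s) *\<^sub>R a2) ((s-1) *\<^sub>R a1)
                                 (- (\<mu> *\<^sub>R tmap r c1) + (s-1) *\<^sub>R c2) ((1+s) *\<^sub>R c1)
       + pairf br (tmap r) c1 c2 (\<mu> *\<^sub>R tmap r a1 + (1+s) *\<^sub>R a2) ((s-1) *\<^sub>R a1)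
                                 (\<mu> *\<^sub>R tmap r b1 + (1+s) *\<^sub>R b2) ((s-1) *\<^sub>R b1)
     = (\<mu>^2 - 4*\<mu>) * (a1 \<bullet> br (tmap r b1) (tmap r c1) - b1 \<bullet> br (tmap r a1) (tmap r c1)
                        + c1 \<bullet> br (tmap r a1) (tmap r b1))"
proof -
  have d: "br x x = 0" for x
  proof -
    have "br x x + br x x = 0" using as[of x x] by (metis add.right_inverse)
    then show ?thesis by (metis scaleR_2 scaleR_eq_0_iff zero_neq_numeral)
  qed
  have o: "br a2 a1 = - br a1 a2" "br b1 a1 = - br a1 b1" "br b1 a2 = - br a2 b1" "br b2 a1 = - br a1 b2" "br b2 a2 = - br a2 b2" "br b2 b1 = - br b1 b2" "br c1 a1 = - br a1 c1" "br c1 a2 = - br a2 c1" "br c1 b1 = - br b1 c1" "br c1 b2 = - br b2 c1" "br c2 a1 = - br a1 c2" "br c2 a2 = - br a2 c2" "br c2 b1 = - br b1 c2" "br c2 b2 = - br b2 c2" "br c2 c1 = - br c1 c2" "br (tmap r a1) a1 = - br a1 (tmap r a1)" "br (tmap r a1) a2 = - br a2 (tmap r a1)" "br (tmap r a1) b1 = - br b1 (tmap r a1)" "br (tmap r a1) b2 = - br b2 (tmap r a1)" "br (tmap r a1) c1 = - br c1 (tmap r a1)" "br (tmap r a1) c2 = - br c2 (tmap r a1)" "br (tmap r a2) a1 = - br a1 (tmap r a2)" "br (tmap r a2) a2 = - br a2 (tmap r a2)" "br (tmap r a2) b1 = - br b1 (tmap r a2)" "br (tmap r a2) b2 = - br b2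 (tmap r a2)" "br (tmap r a2) c1 = - br c1 (tmap r a2)" "br (tmap r a2) c2 = - br c2 (tmap r a2)" "br (tmap r a2) (tmap r a1) = - br (tmap r a1) (tmap r a2)" "br (tmap r b1) a1 = - br a1 (tmap r b1)" "br (tmap r b1) a2 = - br a2 (tmap r b1)" "br (tmap r b1) b1 = - br b1 (tmap r b1)" "br (tmap r b1) b2 = - br b2 (tmap r b1)" "br (tmap r b1) c1 = - br c1 (tmap r b1)" "br (tmap r b1) c2 = - br c2 (tmap r b1)" "br (tmap r b1) (tmap r a1) = - br (tmap r a1) (tmap r b1)" "br (tmap r b1) (tmap r a2) = - br (tmap r a2) (tmap r b1)" "br (tmap r b2) a1 = - br a1 (tmap r b2)" "br (tmap r b2) a2 = - br a2 (tmap r b2)" "br (tmap r b2) b1 = - br b1 (tmap r b2)" "br (tmap r b2) b2 = - br b2 (tmap r b2)" "br (tmap r b2) c1 = - br c1 (tmap r b2)" "br (tmap r b2) c2 = - br c2 (tmap r b2)" "br (tmap r b2) (tmap r a1) = - br (tmap r a1) (tmap r b2)" "br (tmap r b2) (tmap r a2) = - br (tmap r a2) (tmap r b2)" "br (tmap r b2) (tmap r b1) = - br (tmap r b1) (tmap r b2)" "br (tmap r c1) a1 = - br a1 (tmap r c1)" "br (tmap r c1) a2 = - br a2 (tmap r c1)" "br (tmap r c1) b1 = - br b1 (tmap r c1)" "br (tmap r c1) b2 = - br b2 (tmap r c1)" "br (tmap r c1) c1 = - br c1 (tmap r c1)" "br (tmap r c1) c2 = - br c2 (tmap r c1)" "br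 (tmap r c1) (tmap r a1) = - br (tmap r a1) (tmap r c1)" "br (tmap r c1) (tmap r a2) = - br (tmap r a2) (tmap r c1)" "br (tmap r c1) (tmap r b1) = - br (tmap r b1) (tmap r c1)" "br (tmap r c1) (tmap r b2) = - br (tmap r b2) (tmap r c1)" "br (tmap r c2) a1 = - br a1 (tmap r c2)" "br (tmap r c2) a2 = - br a2 (tmap r c2)" "br (tmap r c2) b1 = - br b1 (tmap r c2)" "br (tmap r c2) b2 = - br b2 (tmap r c2)" "br (tmap r c2) c1 = - br c1 (tmap r c2)" "br (tmap r c2) c2 = - br c2 (tmap r c2)" "br (tmap r c2) (tmap r a1) = - br (tmap r a1) (tmap r c2)" "br (tmap r c2) (tmap r a2) = - br (tmap r a2) (tmap r c2)" "br (tmap r c2) (tmap r b1) = - br (tmap r b1) (tmap r c2)" "br (tmap r c2) (tmap r b2) = - br (tmap r b2) (tmap r c2)" "br (tmap r c2) (tmap r c1) = - br (tmap r c1) (tmap r c2)"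
    using as by blast+
  note lin = bilinear_ladd[OF bl] bilinear_radd[OF bl] bilinear_lmul[OF bl] bilinear_rmul[OF bl]
    bilinear_lneg[OF bl] bilinear_rneg[OF bl] bilinear_lsub[OF bl] bilinear_rsub[OF bl] bilinear_lzero[OF bl] bilinear_rzero[OF bl]
  from s show ?thesis
  proof
    assume "s = 1"
    then show ?thesis unfolding pairf_def
      by (simp add: lin o d inner_add_right inner_diff_right power2_eq_square algebra_simps)
  next
    assume "s = -1"
    then show ?thesis unfolding pairf_def
      by (simp add: lin o d inner_add_right inner_diff_right power2_eq_square algebra_simps)
  qed
qed

lemma bil_double:
  assumes bl: "bilinear br" shows "bilinear (double_br br r)"
proof -
  note lin = bilinear_ladd[OF bl] bilinear_radd[OF bl] bilinear_lmul[OF bl] bilinear_rmul[OF bl]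
    bilinear_lneg[OF bl] bilinear_rneg[OF bl] bilinear_lsub[OF bl] bilinear_rsub[OF bl] bilinear_lzero[OF bl] bilinear_rzero[OF bl]
  have 1: "double_br br r (X+X') Y = double_br br r X Y + double_br br r X' Y" for X X' Y
    by (rule vector_eq_ldot[THEN iffD1], rule allI)
      (simp add: pair_formula[OF bl] pairf_def lin inner_add_right inner_diff_right algebra_simps)
  have 2: "double_br br r Y (X+X') = double_br br r Y X + double_br br r Y X'" for X X' Y
    by (rule vector_eq_ldot[THEN iffD1], rule allI)
      (simp add: pair_formula[OF bl] pairf_def lin inner_add_right inner_diff_right algebra_simps)
  have 3: "double_br br r (c *\<^sub>R X) Y = c *\<^sub>R double_br br r X Y" for c X Y
    by (rule vector_eq_ldot[THEN iffD1], rule allI)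
      (simp add: pair_formula[OF bl] pairf_def lin inner_add_right inner_diff_right algebra_simps)
  have 4: "double_br br r Y (c *\<^sub>R X) = c *\<^sub>R double_br br r Y X" for c X Y
    by (rule vector_eq_ldot[THEN iffD1], rule allI)
      (simp add: pair_formula[OF bl] pairf_def lin inner_add_right inner_diff_right algebra_simps)
  show ?thesis unfolding bilinear_def linear_iff using 1 2 3 4 by blast
qed

lemma lie_bil: "lie_algebra br \<Longrightarrow> bilinear br" by (simp add: lie_algebra_def)
lemma lie_as: "lie_algebra br \<Longrightarrow> br x y = - br y x" unfolding lie_algebra_def by blast

definition Cr where
  "Cr br r a b c = a \<bullet> br (tmap r b) (tmap r c) - b \<bullet> br (tmap r a) (tmap r c) + c \<bullet> br (tmap r a) (tmap r b)"

lemma Ecy_rt: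
  assumes "lie_algebra br" "s = 1 \<or> s = -1"
  shows "Ecy (double_br br r) (Fr r s \<mu>) (Gr r s \<mu>) \<alpha> \<beta> \<gamma> = (\<mu>^2 - 4*\<mu>) * Cr br r (dfst \<alpha>) (dfst \<beta>) (dfst \<gamma>)"
  unfolding Ecy_def pair_formula[OF lie_bil[OF assms(1)]] Cr_def Fr_def Gr_def dfst_dpair dsnd_dpair
  by (rule core[OF lie_bil[OF assms(1)] lie_as[OF assms(1)] assms(2)])

lemma Cr_basis:
  assumes "lie_algebra br" "skew_tensor r" "cybe br r"
  shows "Cr br r (axis p 1) (axis q 1) (axis t 1) = 0"
proof -
  have bl: "bilinear br" using assms(1) by (rule lie_bil)
  have tt: "r$i$j = tmap r (axis i 1) $ j" for i j
  proof -
    have "(\<Sum>ia\<in>UNIV. (if ia = i then 1 else 0) * r$ia$j) = (\<Sum>ia\<in>UNIV. if ia = i then r$ia$j else 0)"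
      by (rule sum.cong) auto
    then show ?thesis by (simp add: tmap_def axis_def)
  qed
  have FG: "\<beta> \<bullet> tmap r \<alpha> = \<alpha> \<bullet> (\<lambda>b. - tmap r b) \<beta>" for \<alpha> \<beta>
    using skew_dot[OF assms(2), of \<beta> \<alpha>] by simp
  from cybe_basis[OF bl tt FG] assms(3)
  have "Ecy br (tmap r) (\<lambda>b. - tmap r b) (axis p 1) (axis q 1) (axis t 1) = 0" by blast
  then show ?thesis by (simp add: Ecy_def Cr_def bilinear_lneg[OF bl] bilinear_rneg[OF bl])
qed

lemma Cr_zero:
  assumes "bilinear br"
  shows "Cr br r 0 b c = 0" "Cr br r a 0 c = 0" "Cr br r a b 0 = 0"
  by (simp_all add: Cr_def bilinear_lzero[OF assms] bilinear_rzero[OF assms])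

lemma dfst_axis_cases: "dfst (axis p 1 :: real^('n::finite+'n)) = 0 \<or> (\<exists>j. dfst (axis p 1 :: real^('n+'n)) = axis j 1)"
  by (cases p) (auto simp: dfst_axis)

lemma cybe_rt:
  assumes "lie_algebra br" "skew_tensor r" "cybe br r" "s = 1 \<or> s = -1"
  shows "cybe (double_br br r) (r_tilde r s \<mu>)"
proof -
  have bl: "bilinear br" using assms(1) by (rule lie_bil)
  show ?thesis
  proof (subst cybe_basis[OF bil_double[OF bl] rt_entry FG_rt[OF assms(2)]], intro allI)
    fix p q t :: "'a + 'a"
    have "Cr br r (dfst (axis p 1 :: real^('a+'a))) (dfst (axis q 1 :: real^('a+'a))) (dfst (axis t 1 :: real^('a+'a))) = 0"
      by (cases p; cases q; cases t) (simp_all only: dfst_axis Cr_zero[OF bl] Cr_basis[OF assms(1-3)])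
    then show "Ecy (double_br br r) (Fr r s \<mu>) (Gr r s \<mu>) (axis p 1) (axis q 1) (axis t 1) = 0"
      by (simp add: Ecy_rt[OF assms(1,4)])
  qed
qed

definition swapD :: "'n + 'n \<Rightarrow> 'n + 'n" where "swapD = case_sum Inr Inl"

lemma swapD_simps[simp]: "swapD (Inl i) = Inr i" "swapD (Inr i) = Inl i" "swapD (swapD x) = x"
  by (auto simp: swapD_def split: sum.split)

lemma swapD_eq: "(J = swapD I) \<longleftrightarrow> (I = swapD J)" by auto

definition Om :: "real^('n::finite+'n)^('n+'n)" where "Om = (\<chi> I J. if J = swapD I then 1 else 0)"

lemma dpair_comp[simp]: "dpair x a $ Inl j = x$j" "dpair x a $ Inr j = a$j"
  by (simp_all add: dpair_def)

lemma sym_rt: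
  assumes "skew_tensor r" "s = 1 \<or> s = -1"
  shows "sym_part (r_tilde r s \<mu>) = s *\<^sub>R Om"
proof -
  have "sym_part (r_tilde r s \<mu>) $ I $ J = (s *\<^sub>R Om) $ I $ J" for I J
  proof (cases I; cases J)
    fix i j assume "I = Inl i" "J = Inl j"
    then show ?thesis using skew_entry[OF assms(1), of i j]
      by (simp add: sym_part_def rt_entry transpose_def Fr_def dfst_axis Om_def tmap_axis)
  next
    fix i j assume "I = Inl i" "J = Inr j"
    then show ?thesis
      by (simp add: sym_part_def rt_entry transpose_def Fr_def dfst_axis Om_def) (auto simp: axis_def)
  next
    fix i j assume "I = Inr i" "J = Inl j"
    then show ?thesis
      by (simp add: sym_part_def rt_entry transpose_def Fr_def dfst_axis Om_def) (auto simp: axis_def)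
  next
    fix i j assume "I = Inr i" "J = Inr j"
    then show ?thesis
      by (simp add: sym_part_def rt_entry transpose_def Fr_def dfst_axis Om_def)
  qed
  then show ?thesis by (simp add: vec_eq_iff)
qed

lemma tmap_Om: "tmap (s *\<^sub>R Om) \<xi> = (\<chi> J. s * \<xi> $ swapD J)"
proof -
  have "(\<Sum>I\<in>UNIV. \<xi>$I * (s * (if J = swapD I then 1 else 0))) = s * \<xi> $ swapD J" for J
    by (simp add: swapD_eq if_distrib cong: if_cong)
  then show ?thesis by (simp add: tmap_def Om_def vec_eq_iff)
qed

lemma bij_rt:
  assumes "skew_tensor r" "s = 1 \<or> s = -1"
  shows "bij (tmap (sym_part (r_tilde r s \<mu>)))"
  unfolding sym_rt[OF assms]
proof (rule involuntory_imp_bij)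
  fix \<xi> :: "real^('a+'a)"
  have "s * s = 1" using assms(2) by auto
  then show "tmap (s *\<^sub>R Om) (tmap (s *\<^sub>R Om) \<xi>) = \<xi>"
    by (simp add: tmap_Om vec_eq_iff mult.assoc[symmetric])
qed

lemma Bp_inv:
  assumes "lie_algebra br"
  shows "phi Y \<bullet> double_br br r X W + phi W \<bullet> double_br br r X Y = 0"
proof -
  have bl: "bilinear br" using assms by (rule lie_bil)
  show ?thesis
    unfolding pair_formula[OF bl] phi_eq dfst_dpair dsnd_dpair pairf_def
    using lie_as[OF assms, of "dfst W" "dfst Y"] by (simp add: inner_minus_right)
qed

lemma phi_axis: "phi (axis (swapD P) 1 :: real^('n::finite+'n)) = axis P 1"
  by (cases P) (simp_all add: phi_eq D_eq_iff dfst_axis)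

lemma inv_rt:
  assumes "lie_algebra br" "skew_tensor r" "s = 1 \<or> s = -1"
  shows "invariant_tensor (double_br br r) (sym_part (r_tilde r s \<mu>))"
  unfolding invariant_tensor_def sym_rt[OF assms(2,3)]
proof
  fix X :: "real^('a+'a)"
  let ?A = "ad_mat (double_br br r) X"
  have e: "(?A ** (s *\<^sub>R Om)) $ P $ Q + ((s *\<^sub>R Om) ** transpose ?A) $ P $ Q
     = s * (double_br br r X (axis (swapD Q) 1) $ P + double_br br r X (axis (swapD P) 1) $ Q)" for P Q
  proof -
    have 1: "(\<Sum>I\<in>UNIV. ?A$P$I * (s * (if Q = swapD I then 1 else 0))) = s * ?A $ P $ swapD Q"
      by (simp add: swapD_eq if_distrib cong: if_cong)
    have 2: "(\<Sum>I\<in>UNIV. (s * (if I = swapD P then 1 else 0)) * ?A$Q$I) = s * ?A $ Q $ swapD P"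
    proof -
      have "(\<Sum>I\<in>UNIV. (s * (if I = swapD P then 1 else 0)) * ?A$Q$I) = (\<Sum>I\<in>UNIV. if I = swapD P then s * ?A$Q$I else 0)"
        by (rule sum.cong) auto
      then show ?thesis by simp
    qed
    show ?thesis using 1 2
      by (simp add: matrix_matrix_mult_def transpose_def Om_def ad_mat_def algebra_simps)
  qed
  have "double_br br r X (axis (swapD Q) 1) $ P + double_br br r X (axis (swapD P) 1) $ Q = 0" for P Q
    using Bp_inv[OF assms(1), of "axis (swapD P) 1" r X "axis (swapD Q) 1"]
    by (simp add: phi_axis)
  then show "?A ** (s *\<^sub>R Om) + (s *\<^sub>R Om) ** transpose ?A = 0"
    by (simp add: vec_eq_iff e)
qed

theorem proposition4p9:
  fixes br :: "real^'n \<Rightarrow> real^'n \<Rightarrow> real^'n"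
    and r :: "real^'n^'n" and \<mu> s :: real
  assumes "lie_algebra br"
    and "skew_tensor r"
    and "cybe br r"
    and "s = 1 \<or> s = -1"
  shows "cybe (double_br br r) (r_tilde r s \<mu>)
       \<and> invariant_tensor (double_br br r) (sym_part (r_tilde r s \<mu>))
       \<and> bij (tmap (sym_part (r_tilde r s \<mu>)))"
  using cybe_rt[OF assms] inv_rt[OF assms(1,2,4)] bij_rt[OF assms(2,4)] by blast

end
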